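(* Let $p:E\to B$ be a surjective morphism in $\mathbf{CLS}$ and $E'$ a closure space with the same underlying set as $E$ such that $1_E:E'\to E$ is a morphism in $\mathbf{CLS}$ and the first projection $\pi_1:E\times_BE'\to E'$, $(e,e')\mapsto e$, is a morphism in $\mathbf{CLS}$ (where $E\times_BE'$ is the pullback in $\mathbf{CLS}$ of $p$ and $p:E'\to B$). Write $p'$ for the map $p$ regarded as a morphism $E'\to B$. If both $p$ and $p'$ are regular epimorphisms in $\mathbf{CLS}$, then for every $Y\in\mathcal{C}_{E'}\setminus\mathcal{C}_E$ there exists $Y^*\in\mathcal{C}_{E'}\setminus\mathcal{C}_E$ with $Y\subsetneq Y^*$. In particular, if $\mathcal{C}_{E'}\neq\mathcal{C}_E$, then $E$ is infinite.
   Context: A closure space is a pair $(A,\mathcal{C}_A)$ where $A$ is a set and $\mathcal{C}_A$ is a set of subsets of $A$ closed under arbitrary intersections (so $A\in\mathcal{C}_A$); elements of $\mathcal{C}_A$ are called closed. The category $\mathbf{CLS}$ has closure spaces as objects and, as morphisms $\alpha:A\to B$, maps with $\alpha^{-1}(B')\in\mathcal{C}_A$ for all $B'\in\mathcal{C}_B$. Pullbacks in $\mathbf{CLS}$ are set-theoretic pullbacks with closed sets $\pi_1^{-1}(E_0)\cap\pi_2^{-1}(A_0)$ for $E_0,A_0$ closed in the factors. A morphism $q:E\to B$ in $\mathbf{CLS}$ is a regular epimorphism iff it is surjective and $\mathcal{C}_B=\{X\subseteq B\mid q^{-1}(X)\in\mathcal{C}_E\}$. *)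

theory Defs
  imports Main "HOL-Library.FuncSet"
begin

definition closure_space :: "'a set \<Rightarrow> 'a set set \<Rightarrow> bool" where
  "closure_space A C \<longleftrightarrow> C \<subseteq> Pow A \<and> (\<forall>S. S \<subseteq> C \<longrightarrow> A \<inter> \<Inter>S \<in> C)"

definition cls_mor :: "'a set \<Rightarrow> 'a set set \<Rightarrow> 'b set \<Rightarrow> 'b set set \<Rightarrow> ('a \<Rightarrow> 'b) \<Rightarrow> bool" where
  "cls_mor A CA B CB f \<longleftrightarrow> f \<in> A \<rightarrow> B \<and> (\<forall>X\<in>CB. {x\<in>A. f x \<in> X} \<in> CA)"

definition cls_regular_epi :: "'a set \<Rightarrow> 'a set set \<Rightarrow> 'b set \<Rightarrow> 'b set set \<Rightarrow> ('a \<Rightarrow> 'b) \<Rightarrow> bool" where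
  "cls_regular_epi A CA B CB q \<longleftrightarrow> cls_mor A CA B CB q \<and> q ` A = B \<and>
     CB = {X. X \<subseteq> B \<and> {x\<in>A. q x \<in> X} \<in> CA}"

definition pb_carrier :: "'a set \<Rightarrow> 'c set \<Rightarrow> ('a \<Rightarrow> 'b) \<Rightarrow> ('c \<Rightarrow> 'b) \<Rightarrow> ('a \<times> 'c) set" where
  "pb_carrier A A' f g = {(x, y). x \<in> A \<and> y \<in> A' \<and> f x = g y}"

definition pb_closed :: "'a set \<Rightarrow> 'a set set \<Rightarrow> 'c set \<Rightarrow> 'c set set \<Rightarrow> ('a \<Rightarrow> 'b) \<Rightarrow> ('c \<Rightarrow> 'b)
    \<Rightarrow> ('a \<times> 'c) set set" where
  "pb_closed A CA A' CA' f g =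
     {{z \<in> pb_carrier A A' f g. fst z \<in> X0 \<and> snd z \<in> Y0} | X0 Y0. X0 \<in> CA \<and> Y0 \<in> CA'}"

end

theory Submission
  imports Defs
begin

theorem lemma4p2:
  fixes E :: "'e set" and CE CE' :: "'e set set"
    and B :: "'b set" and CB :: "'b set set" and p :: "'e \<Rightarrow> 'b"
  assumes csE: "closure_space E CE"
    and csE': "closure_space E CE'"
    and csB: "closure_space B CB"
    and p_mor: "cls_mor E CE B CB p"
    and p_surj: "p ` E = B"
    and id_mor: "cls_mor E CE' E CE id"
    and pi1_mor: "cls_mor (pb_carrier E E p p) (pb_closed E CE E CE' p p) E CE' fst"
    and p_reg: "cls_regular_epi E CE B CB p"
    and p'_reg: "cls_regular_epi E CE' B CB p"
  shows "(\<forall>Y \<in> CE' - CE. \<exists>Ystar \<in> CE' - CE. Y \<subset> Ystar) \<and> (CE' \<noteq> CE \<longrightarrow> infinite E)"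
proof -
  have CEpow: "CE \<subseteq> Pow E" using csE by (simp add: closure_space_def)
  have CE'pow: "CE' \<subseteq> Pow E" using csE' by (simp add: closure_space_def)
  have sub: "CE \<subseteq> CE'"
  proof
    fix X assume X: "X \<in> CE"
    then have "{x\<in>E. id x \<in> X} \<in> CE'" using id_mor unfolding cls_mor_def by blast
    moreover have "{x\<in>E. id x \<in> X} = X" using X CEpow by auto
    ultimately show "X \<in> CE'" by simp
  qed
  have step: "\<exists>Ystar \<in> CE' - CE. Y \<subset> Ystar" if Y: "Y \<in> CE' - CE" for Y
  proof -
    have YE: "Y \<subseteq> E" using Y CE'pow by auto
    have "{z \<in> pb_carrier E E p p. fst z \<in> Y} \<in> pb_closed E CE E CE' p p"
      using pi1_mor Y unfolding cls_mor_def by blast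
    then obtain X0 Y0 where X0: "X0 \<in> CE" and Y0: "Y0 \<in> CE'" and
      eq: "{z \<in> pb_carrier E E p p. fst z \<in> Y} = {z \<in> pb_carrier E E p p. fst z \<in> X0 \<and> snd z \<in> Y0}"
      unfolding pb_closed_def by blast
    have key: "x \<in> Y \<longleftrightarrow> x \<in> X0 \<and> y \<in> Y0" if "x \<in> E" "y \<in> E" "p x = p y" for x y
    proof -
      have "(x,y) \<in> pb_carrier E E p p" using that unfolding pb_carrier_def by auto
      then have "(x,y) \<in> {z \<in> pb_carrier E E p p. fst z \<in> Y} \<longleftrightarrow> (x,y) \<in> {z \<in> pb_carrier E E p p. fst z \<in> X0 \<and> snd z \<in> Y0}"
        using eq by simp
      then show ?thesis using \<open>(x,y) \<in> pb_carrier E E p p\<close> by simp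
    qed
    have YY0: "Y \<subseteq> Y0"
    proof
      fix x assume x: "x \<in> Y"
      then have "x \<in> E" using YE by blast
      then show "x \<in> Y0" using key[of x x] x by blast
    qed
    have Y0nE: "Y0 \<notin> CE"
    proof
      assume "Y0 \<in> CE"
      then have "{X0, Y0} \<subseteq> CE" using X0 by simp
      moreover have "\<forall>S. S \<subseteq> CE \<longrightarrow> E \<inter> \<Inter>S \<in> CE" using csE unfolding closure_space_def by (rule conjunct2)
      ultimately have "E \<inter> \<Inter>{X0, Y0} \<in> CE" by blast
      moreover have "E \<inter> \<Inter>{X0, Y0} = Y"
      proof
        show "E \<inter> \<Inter>{X0, Y0} \<subseteq> Y"
        proof
          fix z assume "z \<in> E \<inter> \<Inter>{X0, Y0}"
          then have "z \<in> E" "z \<in> X0" "z \<in> Y0" by auto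
          then show "z \<in> Y" using key[of z z] by blast
        qed
        show "Y \<subseteq> E \<inter> \<Inter>{X0, Y0}"
        proof
          fix z assume z: "z \<in> Y"
          then have "z \<in> E" using YE by blast
          then show "z \<in> E \<inter> \<Inter>{X0, Y0}" using key[of z z] z by blast
        qed
      qed
      ultimately show False using Y by simp
    qed
    have "Y0 \<noteq> Y"
    proof
      assume Y0Y: "Y0 = Y"
      have sat: "{x\<in>E. p x \<in> p ` Y} = Y"
      proof
        show "{x\<in>E. p x \<in> p ` Y} \<subseteq> Y"
        proof
          fix x assume "x \<in> {x\<in>E. p x \<in> p ` Y}"
          then obtain y where "x \<in> E" "y \<in> Y" "p x = p y" by auto
          moreover have "y \<in> E" using \<open>y \<in> Y\<close> YE by blast
          ultimately have "x \<in> Y0" using key[of y x] by (metis)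
          then show "x \<in> Y" using Y0Y by simp
        qed
        show "Y \<subseteq> {x\<in>E. p x \<in> p ` Y}" using YE by auto
      qed
      have "p ` Y \<subseteq> B" using YE p_surj by auto
      moreover have "CB = {X. X \<subseteq> B \<and> {x\<in>E. p x \<in> X} \<in> CE'}" using p'_reg unfolding cls_regular_epi_def by blast
      ultimately have "p ` Y \<in> CB" using sat Y by simp
      then have "{x\<in>E. p x \<in> p ` Y} \<in> CE" using p_mor unfolding cls_mor_def by blast
      then show False using sat Y by simp
    qed
    then show ?thesis using Y0 Y0nE YY0 by blast
  qed
  moreover have "infinite E" if ne: "CE' \<noteq> CE"
  proof
    assume fin: "finite E"
    have "finite (CE' - CE)" using CE'pow fin by (metis finite_Pow_iff finite_subset Diff_subset subset_trans)
    moreover have "CE' - CE \<noteq> {}" using ne sub by blast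
    ultimately obtain m where m: "m \<in> CE' - CE" and mx: "\<forall>b\<in>CE' - CE. m \<le> b \<longrightarrow> m = b"
      using finite_has_maximal by blast
    then obtain Ys where "Ys \<in> CE' - CE" "m \<subset> Ys" using step by blast
    then show False using mx by blast
  qed
  ultimately show ?thesis by blast
qed

end
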